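(* Let $P$ be a finite nonempty set of points lying in a single quadrant $Q$ with respect to the origin $s$, and let $e\ne s$ be such that the line $\overline{se}$ is not in the quadrant $Q$. Then, with $d^{\max}=\max_{p\in P} d(p,\overline{se})$, $$d^{\max} \ge \max\Big\{ \min\{d(l_1,\overline{se}),d(l_2,\overline{se})\},\ \min\{d(u_1,\overline{se}),d(l_2,\overline{se})\},\ \text{the third largest of } d(c_1,\overline{se}),\dots,d(c_4,\overline{se})\Big\},$$ and for every $p\in P$, $$d(p,\overline{se}) \le \max_{i\in\{1,2,3,4\}} d(c_i,\overline{se}).$$
   Context: Bounded Quadrant System (BQS) setup. Points are in the plane with UTM-projected $x$ and $y$ axes, and the start point $s$ is taken as the origin. For a point $p\ne s$, $\theta(p)\in[0,2\pi)$ is the angle between the positive $x$ axis and the vector from $s$ to $p$; $\theta_{s,e}=\theta(e)$. The four quadrants are $Q_k=\{p\neq s: (k-1)\pi/2 \le \theta(p) < k\pi/2\}$, $k=1,\dots,4$; quadrant $Q_k$ has angle range $[\theta^Q_{start},\theta^Q_{end}) = [(k-1)\pi/2,k\pi/2)$. A line $\overline{se}$ is "in" quadrant $Q$ if $\theta^Q_{start}\le \theta_{s,e}<\theta^Q_{end}$. For a finite nonempty $P\subset Q$: the bounding box is the smallest closed axis-parallel rectangle containing $P$, with corners $c_1,\dots,c_4$. $\theta_{lb}=\min_{p\in P}\theta(p)$ and $\theta_{ub}=\max_{p\in P}\theta(p)$; the lower (resp. upper) bounding line is the ray from $s$ at angle $\theta_{lb}$ (resp. $\theta_{ub}$). $l_1,l_2$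 are the intersection points of the lower bounding line with the boundary of the bounding box and $u_1,u_2$ those of the upper bounding line, with index 1 the intersection nearer to $s$ (they may coincide). $d(p,\overline{se})$ is the Euclidean distance from the point $p$ to the line segment from $s$ to $e$. *)

theory Defs
  imports "HOL-Analysis.Analysis"
begin

type_synonym pt = "real \<times> real"

text \<open>Angle of the vector from the origin s = (0,0) to p, in [0, 2 pi).\<close>
definition theta :: "pt \<Rightarrow> real" where
  "theta p = Arg2pi (Complex (fst p) (snd p))"

definition in_quadrant :: "nat \<Rightarrow> pt \<Rightarrow> bool" where
  "in_quadrant k p \<longleftrightarrow> p \<noteq> 0 \<and> (real k - 1) * pi / 2 \<le> theta p \<and> theta p < real k * pi / 2"

definition line_in_quadrant :: "nat \<Rightarrow> pt \<Rightarrow> bool" where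
  "line_in_quadrant k e \<longleftrightarrow> (real k - 1) * pi / 2 \<le> theta e \<and> theta e < real k * pi / 2"

definition seg_dist :: "pt \<Rightarrow> pt \<Rightarrow> real" where
  "seg_dist e p = infdist p (closed_segment 0 e)"

definition xmin :: "pt set \<Rightarrow> real" where "xmin P = Min (fst ` P)"
definition xmax :: "pt set \<Rightarrow> real" where "xmax P = Max (fst ` P)"
definition ymin :: "pt set \<Rightarrow> real" where "ymin P = Min (snd ` P)"
definition ymax :: "pt set \<Rightarrow> real" where "ymax P = Max (snd ` P)"

definition bbox :: "pt set \<Rightarrow> pt set" where
  "bbox P = {q. xmin P \<le> fst q \<and> fst q \<le> xmax P \<and> ymin P \<le> snd q \<and> snd q \<le> ymax P}"

definition corners :: "pt set \<Rightarrow> pt list" where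
  "corners P = [(xmin P, ymin P), (xmax P, ymin P), (xmax P, ymax P), (xmin P, ymax P)]"

definition theta_lb :: "pt set \<Rightarrow> real" where "theta_lb P = Min (theta ` P)"
definition theta_ub :: "pt set \<Rightarrow> real" where "theta_ub P = Max (theta ` P)"

definition ray :: "real \<Rightarrow> pt set" where
  "ray a = {t *\<^sub>R (cos a, sin a) | t. t \<ge> 0}"

text \<open>a (index 1) and b (index 2) are the intersection points of the ray at angle th
  with the boundary of the bounding box, a the one nearer to s, b the farther one.\<close>
definition bound_pts :: "real \<Rightarrow> pt set \<Rightarrow> pt \<Rightarrow> pt \<Rightarrow> bool" where
  "bound_pts th P a b \<longleftrightarrow>
     (let S = ray th \<inter> frontier (bbox P) in
        a \<in> S \<and> b \<in> S \<and> (\<forall>q\<in>S. norm a \<le> norm q \<and> norm q \<le> norm b))"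

definition third_largest :: "real list \<Rightarrow> real" where
  "third_largest xs = sort xs ! (length xs - 3)"

end

theory Submission
  imports Defs
begin


lemma seg_nonempty: "closed_segment (0::pt) e \<noteq> {}" by auto

lemma seg_dist_convex: "convex_on UNIV (seg_dist e)"
proof (rule convex_onI)
  fix t :: real and x y :: pt
  assume t: "0 < t" "t < 1"
  obtain cx where cx: "cx \<in> closed_segment 0 e" "infdist x (closed_segment 0 e) = dist x cx"
    using infdist_attains_inf[OF closed_segment seg_nonempty] by blast
  obtain cy where cy: "cy \<in> closed_segment 0 e" "infdist y (closed_segment 0 e) = dist y cy"
    using infdist_attains_inf[OF closed_segment seg_nonempty] by blast
  have c: "(1 - t) *\<^sub>R cx + t *\<^sub>R cy \<in> closed_segment 0 e"
    using convex_closed_segment[of 0 e] cx(1) cy(1) t unfolding convex_alt by (meson less_imp_le)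
  have "seg_dist e ((1 - t) *\<^sub>R x + t *\<^sub>R y) \<le> dist ((1 - t) *\<^sub>R x + t *\<^sub>R y) ((1 - t) *\<^sub>R cx + t *\<^sub>R cy)"
    unfolding seg_dist_def by (rule infdist_le[OF c])
  also have "\<dots> = norm ((1 - t) *\<^sub>R (x - cx) + t *\<^sub>R (y - cy))"
    by (simp add: dist_norm algebra_simps)
  also have "\<dots> \<le> (1 - t) * norm (x - cx) + t * norm (y - cy)"
    using t by (metis (no_types, lifting) abs_of_nonneg less_eq_real_def norm_scaleR norm_triangle_ineq diff_ge_0_iff_ge)
  also have "\<dots> = (1 - t) * seg_dist e x + t * seg_dist e y"
    using cx cy by (simp add: seg_dist_def dist_norm)
  finally show "seg_dist e ((1 - t) *\<^sub>R x + t *\<^sub>R y) \<le> (1 - t) * seg_dist e x + t * seg_dist e y" .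
qed auto

lemma seg_dist_0: "seg_dist e 0 = 0"
  unfolding seg_dist_def by (simp add: in_closed_iff_infdist_zero seg_nonempty)

lemma seg_dist_nonneg: "seg_dist e p \<ge> 0"
  unfolding seg_dist_def by (simp add: infdist_nonneg)

lemma polar: "fst p = norm p * cos (theta p) \<and> snd p = norm p * sin (theta p)"
proof -
  define z where "z = Complex (fst p) (snd p)"
  have "is_Arg z (Arg2pi z)" using Arg2pi by blast
  hence h: "z = of_real (cmod z) * exp (\<i> * of_real (Arg2pi z))" by (simp add: is_Arg_def)
  have n: "cmod z = norm p" by (simp add: z_def cmod_def norm_Pair norm_prod_def)
  have "Re z = cmod z * cos (Arg2pi z)" "Im z = cmod z * sin (Arg2pi z)"
    by (subst h; simp add: Re_exp Im_exp)+
  thus ?thesis using n by (simp add: z_def theta_def)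
qed

lemma third1: "third_largest [a,b,c,d] \<le> max b d"
  by (simp add: third_largest_def)

lemma third2: "third_largest [a,b,c,d] \<le> max a c"
  by (simp add: third_largest_def)



lemma seg_pt: "s \<in> closed_segment (0::pt) e \<Longrightarrow> \<exists>l. 0 \<le> l \<and> l \<le> 1 \<and> s = l *\<^sub>R e"
  by (auto simp: closed_segment_def)

lemma seg_pt2: "0 \<le> l \<Longrightarrow> l \<le> 1 \<Longrightarrow> l *\<^sub>R e \<in> closed_segment (0::pt) e"
  by (auto simp: closed_segment_def)

lemma mono_x:
  assumes sx: "sx = 1 \<or> sx = (-1::real)" and sy: "sy = 1 \<or> sy = (-1::real)"
    and qa: "sx * a \<ge> 0" and qb: "sy * b \<ge> 0"
    and ne: "\<not> (sx * fst e > 0 \<and> sy * snd e > 0)" and t: "t \<ge> 0"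
  shows "seg_dist e (a, b) \<le> seg_dist e (a + sx * t, b)"
proof -
  obtain s where s: "s \<in> closed_segment 0 e" "infdist (a + sx * t, b) (closed_segment 0 e) = dist (a + sx * t, b) s"
    using infdist_attains_inf[OF closed_segment seg_nonempty] by blast
  obtain l where l: "0 \<le> l" "l \<le> 1" "s = l *\<^sub>R e" using seg_pt[OF s(1)] by blast
  obtain ex ey where e: "e = (ex, ey)" by (cases e)
  have R: "seg_dist e (a + sx * t, b) = sqrt ((a + sx*t - l*ex)^2 + (b - l*ey)^2)"
    using s l e by (simp add: seg_dist_def dist_Pair_Pair dist_real_def)
  show ?thesis
  proof (cases "sx * (l * ex) \<le> sx * a")
    case True
    have "seg_dist e (a, b) \<le> dist (a,b) s" unfolding seg_dist_def by (rule infdist_le[OF s(1)])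
    also have "\<dots> = sqrt ((a - l*ex)^2 + (b - l*ey)^2)" using l e by (simp add: dist_Pair_Pair dist_real_def)
    also have "\<dots> \<le> sqrt ((a + sx*t - l*ex)^2 + (b - l*ey)^2)"
    proof -
      have D: "0 \<le> sx*(a - l*ex)" using True by (simp add: algebra_simps)
      have e1: "(a - l*ex)^2 = (sx*(a - l*ex))^2" using sx by (auto simp: power2_eq_square algebra_simps)
      have e2: "(a + sx*t - l*ex)^2 = (sx*(a - l*ex) + t)^2" using sx by (auto simp: algebra_simps power2_eq_square)
      have "(a - l*ex)^2 \<le> (a + sx*t - l*ex)^2"
        unfolding e1 e2 by (rule power_mono) (use D t in auto)
      thus ?thesis by simp
    qed
    finally show ?thesis using R by simp
  next
    case False
    have "0 < l * (sx * ex)" using False qa by (simp add: algebra_simps)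
    hence lp: "sx * ex > 0" using l(1) by (simp add: zero_less_mult_iff)
    hence ey: "sy * ey \<le> 0" using ne e by auto
    have exn: "ex \<noteq> 0" using lp by auto
    define m where "m = a / ex"
    have mex: "m * ex = a" using exn by (simp add: m_def)
    have m0: "m \<ge> 0"
    proof -
      have "m = (sx * a) / (sx * ex)" using sx by (auto simp: m_def)
      thus ?thesis using qa lp by (metis divide_nonneg_pos)
    qed
    have ml: "m \<le> l"
    proof -
      have "sx * ex * m < sx * ex * l" using False mex by (metis mult.commute mult.left_commute not_le)
      thus ?thesis using lp by (meson less_imp_le mult_less_cancel_left_pos)
    qed
    have m1: "m \<le> 1" using ml l by simp
    have "seg_dist e (a, b) \<le> dist (a,b) (m *\<^sub>R e)" unfolding seg_dist_def by (rule infdist_le[OF seg_pt2[OF m0 m1]])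
    also have "\<dots> = \<bar>b - m*ey\<bar>" using e mex by (simp add: dist_Pair_Pair dist_real_def)
    also have "\<dots> \<le> \<bar>b - l*ey\<bar>"
    proof -
      have h1: "m*(sy*ey) \<le> 0" using m0 ey mult_nonneg_nonpos by blast
      have h2: "sy*(b - m*ey) = sy*b - m*(sy*ey)" "sy*(b - l*ey) = sy*b - l*(sy*ey)" by (simp_all add: algebra_simps)
      have h3: "l*(sy*ey) \<le> m*(sy*ey)" using ml ey by (rule mult_right_mono_neg)
      have a1: "\<bar>b - m*ey\<bar> = \<bar>sy*(b - m*ey)\<bar>" "\<bar>b - l*ey\<bar> = \<bar>sy*(b - l*ey)\<bar>"
        using sy by (auto simp: abs_mult)
      show ?thesis unfolding a1 h2 using h1 h3 qb by linarith
    qed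
    also have "\<dots> \<le> sqrt ((a + sx*t - l*ex)^2 + (b - l*ey)^2)"
    proof -
      have "\<bar>b - l*ey\<bar> = sqrt ((b - l*ey)^2)" by simp
      also have "\<dots> \<le> sqrt ((a + sx*t - l*ex)^2 + (b - l*ey)^2)" by (rule real_sqrt_le_mono) simp
      finally show ?thesis .
    qed
    finally show ?thesis using R by simp
  qed
qed



lemma swap_seg: "seg_dist (prod.swap e) (prod.swap q) = seg_dist e q"
proof -
  have S: "closed_segment 0 (prod.swap e) = prod.swap ` closed_segment (0::pt) e"
    apply (auto simp: closed_segment_def image_iff prod.swap_def)
    subgoal for u by (rule exI[of _ u]) (simp add: prod_eq_iff)
    done
  have d: "\<And>x y::pt. dist (prod.swap x) (prod.swap y) = dist x y"
    by (simp add: dist_Pair_Pair prod.swap_def dist_prod_def add.commute)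
  show ?thesis unfolding seg_dist_def infdist_def S
    by (simp add: image_comp o_def d)
qed

lemma mono_y:
  assumes sx: "sx = 1 \<or> sx = (-1::real)" and sy: "sy = 1 \<or> sy = (-1::real)"
    and qa: "sx * a \<ge> 0" and qb: "sy * b \<ge> 0"
    and ne: "\<not> (sx * fst e > 0 \<and> sy * snd e > 0)" and t: "t \<ge> 0"
  shows "seg_dist e (a, b) \<le> seg_dist e (a, b + sy * t)"
proof -
  have ne': "\<not> (sy * fst (prod.swap e) > 0 \<and> sx * snd (prod.swap e) > 0)" using ne by auto
  have "seg_dist (prod.swap e) (b, a) \<le> seg_dist (prod.swap e) (b + sy * t, a)"
    by (rule mono_x[OF sy sx qb qa ne' t])
  thus ?thesis using swap_seg[of e "(a,b)"] swap_seg[of e "(a, b + sy*t)"] by simp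
qed



lemma theta_range: "0 \<le> theta p \<and> theta p < 2*pi"
  unfolding theta_def using Arg2pi by blast

lemma q1: "in_quadrant 1 p \<Longrightarrow> fst p > 0 \<and> snd p \<ge> 0"
proof -
  assume h: "in_quadrant 1 p"
  hence n: "norm p > 0" and r: "0 \<le> theta p" "theta p < pi/2" by (auto simp: in_quadrant_def)
  have "cos (theta p) > 0" using r by (intro cos_gt_zero_pi) auto
  moreover have "sin (theta p) \<ge> 0" using r by (intro sin_ge_zero) auto
  ultimately show ?thesis using polar[of p] n by simp
qed

lemma q2: "in_quadrant 2 p \<Longrightarrow> fst p \<le> 0 \<and> snd p > 0"
proof -
  assume h: "in_quadrant 2 p"
  hence n: "norm p > 0" and r: "pi/2 \<le> theta p" "theta p < pi" by (auto simp: in_quadrant_def)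
  have "cos (pi - theta p) \<ge> 0" using r by (intro cos_ge_zero) auto
  hence "cos (theta p) \<le> 0" by simp
  moreover have "sin (theta p) > 0" using r by (intro sin_gt_zero) auto
  ultimately show ?thesis using polar[of p] n by (simp add: mult_nonneg_nonpos)
qed

lemma q3: "in_quadrant 3 p \<Longrightarrow> fst p < 0 \<and> snd p \<le> 0"
proof -
  assume h: "in_quadrant 3 p"
  hence n: "norm p > 0" and r: "pi \<le> theta p" "theta p < 3*pi/2" by (auto simp: in_quadrant_def)
  have "cos (theta p - pi) > 0" using r by (intro cos_gt_zero_pi) auto
  hence "cos (theta p) < 0" by (simp add: cos_diff)
  moreover have "sin (theta p - pi) \<ge> 0" using r by (intro sin_ge_zero) auto
  hence "sin (theta p) \<le> 0" by (simp add: sin_diff)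
  ultimately show ?thesis using polar[of p] n by (simp add: mult_pos_neg mult_nonneg_nonpos)
qed

lemma q4: "in_quadrant 4 p \<Longrightarrow> fst p \<ge> 0 \<and> snd p < 0"
proof -
  assume h: "in_quadrant 4 p"
  hence n: "norm p > 0" and r: "3*pi/2 \<le> theta p" "theta p < 2*pi" by (auto simp: in_quadrant_def)
  have "cos (2*pi - theta p) \<ge> 0" using r by (intro cos_ge_zero) auto
  hence "cos (theta p) \<ge> 0" by (simp add: cos_diff)
  moreover have "sin (2*pi - theta p) > 0" using r by (intro sin_gt_zero) auto
  hence "sin (theta p) < 0" by (simp add: sin_diff)
  ultimately show ?thesis using polar[of p] n by (simp add: mult_pos_neg)
qed

lemma e_quad:
  assumes "e \<noteq> 0" "\<not> line_in_quadrant k e"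
  shows "\<exists>j. j \<in> {1..4} \<and> j \<noteq> k \<and> in_quadrant j e"
proof -
  have r: "0 \<le> theta e" "theta e < 2*pi" using theta_range by auto
  have L: "\<And>j. in_quadrant j e \<longleftrightarrow> line_in_quadrant j e"
    using assms(1) by (simp add: in_quadrant_def line_in_quadrant_def)
  have "in_quadrant 1 e \<or> in_quadrant 2 e \<or> in_quadrant 3 e \<or> in_quadrant 4 e"
    using r assms(1) by (auto simp: in_quadrant_def)
  thus ?thesis
    apply (elim disjE)
    subgoal by (rule exI[of _ 1]) (use L assms(2) in auto)
    subgoal by (rule exI[of _ 2]) (use L assms(2) in auto)
    subgoal by (rule exI[of _ 3]) (use L assms(2) in auto)
    subgoal by (rule exI[of _ 4]) (use L assms(2) in auto)
    done
qed



lemma signs: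
  assumes "k \<in> {1..4}" "\<forall>p\<in>P. in_quadrant k p" "e \<noteq> 0" "\<not> line_in_quadrant k e"
  shows "\<exists>sx sy. (sx = 1 \<or> sx = (-1::real)) \<and> (sy = 1 \<or> sy = (-1::real)) \<and>
     (\<forall>p\<in>P. sx * fst p \<ge> 0 \<and> sy * snd p \<ge> 0) \<and>
     ((\<forall>p\<in>P. sx * fst p > 0) \<or> (\<forall>p\<in>P. sy * snd p > 0)) \<and>
     \<not> (sx * fst e > 0 \<and> sy * snd e > 0)"
proof -
  obtain j where j: "j \<in> {1..4}" "j \<noteq> k" "in_quadrant j e" using e_quad[OF assms(3,4)] by blast
  have ej: "(j=1 \<longrightarrow> fst e>0 \<and> snd e \<ge>0) \<and> (j=2 \<longrightarrow> fst e \<le> 0 \<and> snd e > 0) \<and>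
            (j=3 \<longrightarrow> fst e<0 \<and> snd e \<le>0) \<and> (j=4 \<longrightarrow> fst e \<ge> 0 \<and> snd e < 0)"
    using q1[of e] q2[of e] q3[of e] q4[of e] j(3) by auto
  have jj: "j = 1 \<or> j = 2 \<or> j = 3 \<or> j = 4" using j(1) by auto
  have "k = 1 \<or> k = 2 \<or> k = 3 \<or> k = 4" using assms(1) by auto
  moreover
  { assume k: "k = 1"
    have ?thesis
      by (rule exI[of _ 1], rule exI[of _ 1]) (use q1 assms(2) k ej jj j(2) in fastforce) }
  moreover
  { assume k: "k = 2"
    have ?thesis
      by (rule exI[of _ "-1"], rule exI[of _ 1]) (use q2 assms(2) k ej jj j(2) in fastforce) }
  moreover
  { assume k: "k = 3"
    have ?thesis
      by (rule exI[of _ "-1"], rule exI[of _ "-1"]) (use q3 assms(2) k ej jj j(2) in fastforce) }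
  moreover
  { assume k: "k = 4"
    have ?thesis
      by (rule exI[of _ 1], rule exI[of _ "-1"]) (use q4 assms(2) k ej jj j(2) in fastforce) }
  ultimately show ?thesis by blast
qed

lemma cvx_max:
  assumes "0 \<le> u" "u \<le> 1"
  shows "seg_dist e ((1 - u) *\<^sub>R A + u *\<^sub>R B) \<le> max (seg_dist e A) (seg_dist e B)"
proof -
  have "seg_dist e ((1 - u) *\<^sub>R A + u *\<^sub>R B) \<le> (1 - u) * seg_dist e A + u * seg_dist e B"
    using convex_onD[OF seg_dist_convex] assms by blast
  also have "\<dots> \<le> (1 - u) * max (seg_dist e A) (seg_dist e B) + u * max (seg_dist e A) (seg_dist e B)"
    using assms by (intro add_mono mult_left_mono) auto
  also have "\<dots> = max (seg_dist e A) (seg_dist e B)" by (simp add: algebra_simps)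
  finally show ?thesis .
qed

lemma interp: "(a::real) \<le> x \<Longrightarrow> x \<le> b \<Longrightarrow> \<exists>u. 0 \<le> u \<and> u \<le> 1 \<and> x = (1 - u) * a + u * b"
proof (cases "a = b")
  case True
  assume "a \<le> x" "x \<le> b" thus ?thesis using True by (intro exI[of _ 0]) auto
next
  case False
  assume h: "a \<le> x" "x \<le> b"
  hence ab: "a < b" using False by auto
  define u where "u = (x - a) / (b - a)"
  have e1: "u * (b - a) = x - a" using ab by (simp add: u_def)
  have e2: "(1 - u) * a + u * b = a + u * (b - a)" by (simp add: algebra_simps)
  have "0 \<le> u" using h ab by (simp add: u_def)
  moreover have "u \<le> 1" using h ab by (simp add: u_def)
  ultimately show ?thesis using e1 e2 by (intro exI[of _ u]) auto
qed

lemma horiz: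
  assumes "a \<le> x" "x \<le> b"
  shows "seg_dist e (x, y) \<le> max (seg_dist e (a, y)) (seg_dist e (b, y))"
proof -
  obtain u where u: "0 \<le> u" "u \<le> 1" "x = (1 - u) * a + u * b" using interp[OF assms] by blast
  have "(x, y) = (1 - u) *\<^sub>R (a, y) + u *\<^sub>R (b, y)" using u by (simp add: algebra_simps)
  thus ?thesis using cvx_max[OF u(1,2)] by metis
qed

lemma vert:
  assumes "a \<le> y" "y \<le> b"
  shows "seg_dist e (x, y) \<le> max (seg_dist e (x, a)) (seg_dist e (x, b))"
proof -
  obtain u where u: "0 \<le> u" "u \<le> 1" "y = (1 - u) * a + u * b" using interp[OF assms] by blast
  have "(x, y) = (1 - u) *\<^sub>R (x, a) + u *\<^sub>R (x, b)" using u by (simp add: algebra_simps)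
  thus ?thesis using cvx_max[OF u(1,2)] by metis
qed

lemma ray_le:
  assumes bp: "bound_pts th P a b" and n0: "0 \<notin> bbox P" and pb: "p0 \<in> bbox P"
    and pr: "p0 = norm p0 *\<^sub>R (cos th, sin th)"
  shows "seg_dist e a \<le> seg_dist e p0"
proof -
  define S where "S = ray th \<inter> frontier (bbox P)"
  have aS: "a \<in> S" and amin: "\<forall>q\<in>S. norm a \<le> norm q" using bp by (auto simp: bound_pts_def S_def Let_def)
  have p00: "p0 \<noteq> 0" using n0 pb by auto
  have "closed_segment 0 p0 \<inter> frontier (bbox P) \<noteq> {}"
    by (rule connected_Int_frontier) (use pb n0 in auto)
  then obtain q where q: "q \<in> closed_segment 0 p0" "q \<in> frontier (bbox P)" by blast
  obtain u where u: "0 \<le> u" "u \<le> 1" "q = u *\<^sub>R p0" using seg_pt[OF q(1)] by blast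
  have "q = (u * norm p0) *\<^sub>R (cos th, sin th)" using u(3) pr by (metis scaleR_scaleR)
  hence "q \<in> ray th" using u(1) unfolding ray_def by auto
  hence "q \<in> S" using q(2) S_def by auto
  hence "norm a \<le> norm q" using amin by auto
  also have "\<dots> \<le> norm p0" using u by (simp add: mult_left_le_one_le)
  finally have an: "norm a \<le> norm p0" .
  have "a \<in> ray th" using aS S_def by auto
  then obtain t where t: "t \<ge> 0" "a = t *\<^sub>R (cos th, sin th)" unfolding ray_def by auto
  have w1: "norm (cos th, sin th) = 1" by (simp add: norm_Pair)
  have nt: "norm a = t" by (simp only: t(2) norm_scaleR w1) (simp add: t(1))
  have np: "norm p0 > 0" using p00 by simp
  define al where "al = t / norm p0"
  have al: "0 \<le> al" "al \<le> 1" using t an nt np by (auto simp: al_def)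
  have m: "al * norm p0 = t" using np by (simp add: al_def)
  have "al *\<^sub>R p0 = al *\<^sub>R (norm p0 *\<^sub>R (cos th, sin th))"
    using arg_cong[OF pr, of "\<lambda>v. al *\<^sub>R v"] by simp
  also have "\<dots> = a" by (simp only: scaleR_scaleR m t(2))
  finally have "a = al *\<^sub>R p0" by simp
  hence "a = (1 - al) *\<^sub>R 0 + al *\<^sub>R p0" by simp
  hence "seg_dist e a \<le> (1 - al) * seg_dist e 0 + al * seg_dist e p0"
    using convex_onD[OF seg_dist_convex] al by (metis UNIV_I)
  also have "\<dots> = al * seg_dist e p0" by (simp add: seg_dist_0)
  also have "\<dots> \<le> seg_dist e p0" using al seg_dist_nonneg[of e p0] by (simp add: mult_left_le_one_le)
  finally show ?thesis .
qed



lemma polar_vec: "p = norm p *\<^sub>R (cos (theta p), sin (theta p))"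
  using polar[of p] by (simp add: prod_eq_iff)

lemma third3: "third_largest [a,b,c,d] \<le> max c a"
  using third2[of a b c d] by (simp add: max.commute)

lemma third4: "third_largest [a,b,c,d] \<le> max d b"
  using third1[of a b c d] by (simp add: max.commute)

theorem theorem5:
  fixes P :: "pt set" and k :: nat and e l1 l2 u1 u2 :: pt
  assumes "k \<in> {1..4}"
    and "finite P" and "P \<noteq> {}"
    and "\<forall>p\<in>P. in_quadrant k p"
    and "e \<noteq> 0" and "\<not> line_in_quadrant k e"
    and "bound_pts (theta_lb P) P l1 l2"
    and "bound_pts (theta_ub P) P u1 u2"
  shows "(Max (seg_dist e ` P) \<ge>
           max (min (seg_dist e l1) (seg_dist e l2))
             (max (min (seg_dist e u1) (seg_dist e l2))
                  (third_largest (map (seg_dist e) (corners P)))))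
         \<and> (\<forall>p\<in>P. seg_dist e p \<le> Max (seg_dist e ` set (corners P)))"
proof -
  obtain sx sy where sx: "sx = 1 \<or> sx = (-1::real)" and sy: "sy = 1 \<or> sy = (-1::real)"
    and sP: "\<forall>p\<in>P. sx * fst p \<ge> 0 \<and> sy * snd p \<ge> 0"
    and strict: "(\<forall>p\<in>P. sx * fst p > 0) \<or> (\<forall>p\<in>P. sy * snd p > 0)"
    and se: "\<not> (sx * fst e > 0 \<and> sy * snd e > 0)"
    using signs[OF assms(1,4,5,6)] by blast
  have fin: "finite (fst ` P)" "finite (snd ` P)" "finite (theta ` P)" using assms(2) by auto
  have ne: "fst ` P \<noteq> {}" "snd ` P \<noteq> {}" "theta ` P \<noteq> {}" using assms(3) by auto
  obtain pxl where pxl: "pxl \<in> P" "fst pxl = xmin P" using Min_in[OF fin(1) ne(1)] unfolding xmin_def by auto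
  obtain pxu where pxu: "pxu \<in> P" "fst pxu = xmax P" using Max_in[OF fin(1) ne(1)] unfolding xmax_def by auto
  obtain pyl where pyl: "pyl \<in> P" "snd pyl = ymin P" using Min_in[OF fin(2) ne(2)] unfolding ymin_def by auto
  obtain pyu where pyu: "pyu \<in> P" "snd pyu = ymax P" using Max_in[OF fin(2) ne(2)] unfolding ymax_def by auto
  have bnd: "\<And>p. p \<in> P \<Longrightarrow> xmin P \<le> fst p \<and> fst p \<le> xmax P \<and> ymin P \<le> snd p \<and> snd p \<le> ymax P"
    using fin by (auto simp: xmin_def xmax_def ymin_def ymax_def)
  have PB: "P \<subseteq> bbox P" using bnd by (auto simp: bbox_def)
  have sgn: "sx * xmin P \<ge> 0" "sx * xmax P \<ge> 0" "sy * ymin P \<ge> 0" "sy * ymax P \<ge> 0"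
    using sP pxl pxu pyl pyu by metis+
  have n0: "0 \<notin> bbox P"
  proof
    assume z: "0 \<in> bbox P"
    hence z': "xmin P \<le> 0" "0 \<le> xmax P" "ymin P \<le> 0" "0 \<le> ymax P" by (auto simp: bbox_def)
    from strict show False
    proof
      assume "\<forall>p\<in>P. sx * fst p > 0"
      hence "sx * xmin P > 0" "sx * xmax P > 0" using pxl pxu by metis+
      thus False using sx z' by auto
    next
      assume "\<forall>p\<in>P. sy * snd p > 0"
      hence "sy * ymin P > 0" "sy * ymax P > 0" using pyl pyu by metis+
      thus False using sy z' by auto
    qed
  qed
  define f where "f = seg_dist e"
  have MP: "\<And>p. p \<in> P \<Longrightarrow> f p \<le> Max (f ` P)" using assms(2) by (auto intro: Max_ge)
  have MC: "\<And>c. c \<in> set (corners P) \<Longrightarrow> f c \<le> Max (f ` set (corners P))" by (auto intro: Max_ge)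
  have part2: "\<forall>p\<in>P. f p \<le> Max (f ` set (corners P))"
  proof
    fix p assume pP: "p \<in> P"
    obtain x y where p: "p = (x, y)" by (cases p)
    have b: "xmin P \<le> x" "x \<le> xmax P" "ymin P \<le> y" "y \<le> ymax P" using bnd[OF pP] p by auto
    have "f p \<le> max (f (x, ymin P)) (f (x, ymax P))" unfolding f_def p by (rule vert[OF b(3,4)])
    also have "\<dots> \<le> max (max (f (xmin P, ymin P)) (f (xmax P, ymin P))) (max (f (xmin P, ymax P)) (f (xmax P, ymax P)))"
      unfolding f_def by (intro max.mono horiz b(1,2))
    also have "\<dots> \<le> Max (f ` set (corners P))"
      using MC by (simp add: corners_def)
    finally show "f p \<le> Max (f ` set (corners P))" .
  qed
  obtain p0 where p0: "p0 \<in> P" "theta p0 = theta_lb P" using Min_in[OF fin(3) ne(3)] unfolding theta_lb_def by auto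
  obtain p1 where p1: "p1 \<in> P" "theta p1 = theta_ub P" using Max_in[OF fin(3) ne(3)] unfolding theta_ub_def by auto
  have t1: "f l1 \<le> f p0" unfolding f_def
    by (rule ray_le[OF assms(7) n0]) (use PB p0 polar_vec[of p0] in auto)
  have t2: "f u1 \<le> f p1" unfolding f_def
    by (rule ray_le[OF assms(8) n0]) (use PB p1 polar_vec[of p1] in auto)
  define farx where "farx = (if sx = 1 then xmax P else xmin P)"
  define nearx where "nearx = (if sx = 1 then xmin P else xmax P)"
  define fary where "fary = (if sy = 1 then ymax P else ymin P)"
  define neary where "neary = (if sy = 1 then ymin P else ymax P)"
  obtain pr where pr: "pr \<in> P" "fst pr = farx" using pxl pxu farx_def by metis
  obtain pt where pt: "pt \<in> P" "snd pt = fary" using pyl pyu fary_def by metis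
  have sg2: "sx * farx \<ge> 0" "sx * nearx \<ge> 0" "sy * fary \<ge> 0" "sy * neary \<ge> 0"
    using sgn by (auto simp: farx_def nearx_def fary_def neary_def)
  define ty where "ty = sy * (snd pr - neary)"
  have ty: "ty \<ge> 0" "snd pr = neary + sy * ty" using bnd[OF pr(1)] sy by (auto simp: ty_def neary_def)
  define tx where "tx = sx * (fst pt - nearx)"
  have tx: "tx \<ge> 0" "fst pt = nearx + sx * tx" using bnd[OF pt(1)] sx by (auto simp: tx_def nearx_def)
  have A: "f (farx, neary) \<le> f pr"
  proof -
    have "f (farx, neary) \<le> f (farx, neary + sy * ty)" unfolding f_def
      by (rule mono_y[OF sx sy sg2(1) sg2(4) se ty(1)])
    also have "(farx, neary + sy * ty) = pr" using pr(2) ty(2) by (simp add: prod_eq_iff)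
    finally show ?thesis .
  qed
  have B: "f (nearx, fary) \<le> f pt"
  proof -
    have "f (nearx, fary) \<le> f (nearx + sx * tx, fary)" unfolding f_def
      by (rule mono_x[OF sx sy sg2(2) sg2(3) se tx(1)])
    also have "(nearx + sx * tx, fary) = pt" using pt(2) tx(2) by (simp add: prod_eq_iff)
    finally show ?thesis .
  qed
  have T: "third_largest (map f (corners P)) \<le> max (f (farx, neary)) (f (nearx, fary))"
    using sx sy third1 third2 third3 third4
    by (auto simp: corners_def farx_def nearx_def fary_def neary_def)
  have part1: "Max (f ` P) \<ge> max (min (f l1) (f l2)) (max (min (f u1) (f l2)) (third_largest (map f (corners P))))"
    using MP[OF p0(1)] MP[OF p1(1)] MP[OF pr(1)] MP[OF pt(1)] t1 t2 A B T by linarith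
  show ?thesis using part1 part2 unfolding f_def by blast
qed

end
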